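(* Let $P\subseteq\mathbb{R}^7$ be an associative $3$-plane. Then $\Theta(P) = \Lambda^2(P)\oplus(P\lrcorner\varphi)$, i.e. $\Theta(P) = \Lambda^2(P) + (P\lrcorner\varphi)$ and $\Lambda^2(P)\cap(P\lrcorner\varphi) = \{0\}$; this direct sum is not orthogonal.
   Context: Equip $\mathbb{R}^7$ with its standard inner product, orientation and basis $e_1,\dots,e_7$. Let $\varphi = e_{123} - e_{167} - e_{527} - e_{563} - e_{415} - e_{426} - e_{437}$ ($e_{ijk} = e_i\wedge e_j\wedge e_k$), $\psi = \star\varphi = e_{4567} - e_{4523} - e_{4163} - e_{4127} - e_{2637} - e_{1537} - e_{1526}$, and define $\times$ by $\langle u \times v, w \rangle = \varphi(u,v,w)$. A $3$-dimensional subspace is associative if closed under $\times$. For $u,v$: $u\wedge v$ is the 2-form $(a,b)\mapsto \langle u,a\rangle\langle v,b\rangle - \langle u,b\rangle\langle v,a\rangle$; $u\lrcorner\varphi$ is the 2-form $(a,b)\mapsto \varphi(u,a,b)$; $\Psi_{uv}$ is the 2-form $(a,b)\mapsto\psi(u,v,a,b)$. $P\lrcorner\varphi = \{u\lrcorner\varphi : u\in P\}$, $\Lambda^2(P) = \mathrm{Span}\{u\wedge v: u,v\in P\}$, $\Psi(P) = \mathrm{Span}\{\Psi_{uv} : u,v\in P\}$, and $\Theta(P) = \Lambda^2(P)\oplus\Psi(P)$. The inner product on $\Lambda^2$ is $\langle X,Y\rangle = \sum_{i,j}X(e_i,e_j)Y(e_i,e_j)$. *)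

theory Defs
  imports "HOL-Analysis.Analysis"
begin

text \<open>Vectors of R^7 are elements of real^7. The basis vector e_n (n = 1..7) is
  axis (n::7) 1; in the numeral type 7 the indices 1,...,6,7 are the seven distinct
  elements (7 = 0 in this type). k-forms are multilinear maps real^7 => ... => real.\<close>

definition ebasis :: "7 \<Rightarrow> real^7" where
  "ebasis i = axis i 1"

definition elem_form :: "7 list \<Rightarrow> (real^7) list \<Rightarrow> real" where
  "elem_form idx vs =
     (\<Sum>p | p permutes {..<length idx}.
        of_int (sign p) * (\<Prod>l<length idx. (vs ! (p l)) $ (idx ! l)))"

definition phi :: "real^7 \<Rightarrow> real^7 \<Rightarrow> real^7 \<Rightarrow> real" where
  "phi a b c =
     elem_form [1,2,3] [a,b,c] - elem_form [1,6,7] [a,b,c] - elem_form [5,2,7] [a,b,c]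
   - elem_form [5,6,3] [a,b,c] - elem_form [4,1,5] [a,b,c] - elem_form [4,2,6] [a,b,c]
   - elem_form [4,3,7] [a,b,c]"

definition psi :: "real^7 \<Rightarrow> real^7 \<Rightarrow> real^7 \<Rightarrow> real^7 \<Rightarrow> real" where
  "psi a b c d =
     elem_form [4,5,6,7] [a,b,c,d] - elem_form [4,5,2,3] [a,b,c,d]
   - elem_form [4,1,6,3] [a,b,c,d] - elem_form [4,1,2,7] [a,b,c,d]
   - elem_form [2,6,3,7] [a,b,c,d] - elem_form [1,5,3,7] [a,b,c,d]
   - elem_form [1,5,2,6] [a,b,c,d]"

text \<open>Cross product: the unique vector with <u x v, w> = phi(u,v,w), i.e. its i-th
  component is phi(u,v,e_i).\<close>
definition cross7 :: "real^7 \<Rightarrow> real^7 \<Rightarrow> real^7" where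
  "cross7 u v = (\<chi> i. phi u v (ebasis i))"

definition associative :: "(real^7) set \<Rightarrow> bool" where
  "associative P \<longleftrightarrow> subspace P \<and> dim P = 3 \<and> (\<forall>u\<in>P. \<forall>v\<in>P. cross7 u v \<in> P)"

text \<open>A (bilinear) 2-form is represented by its component matrix X(e_i,e_j); with this
  representation the inner product X \<bullet> Y on real^7^7 is exactly
  sum_{i,j} X(e_i,e_j) Y(e_i,e_j).\<close>
definition form2 :: "(real^7 \<Rightarrow> real^7 \<Rightarrow> real) \<Rightarrow> real^7^7" where
  "form2 B = (\<chi> i j. B (ebasis i) (ebasis j))"

definition wedge2 :: "real^7 \<Rightarrow> real^7 \<Rightarrow> real^7^7" where
  "wedge2 u v = form2 (\<lambda>a b. inner u a * inner v b - inner u b * inner v a)"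

definition contr_phi :: "real^7 \<Rightarrow> real^7^7" where
  "contr_phi u = form2 (\<lambda>a b. phi u a b)"

definition Psi2 :: "real^7 \<Rightarrow> real^7 \<Rightarrow> real^7^7" where
  "Psi2 u v = form2 (\<lambda>a b. psi u v a b)"

definition contr_phi_set :: "(real^7) set \<Rightarrow> (real^7^7) set" where
  "contr_phi_set P = contr_phi ` P"

definition Lambda2 :: "(real^7) set \<Rightarrow> (real^7^7) set" where
  "Lambda2 P = span {wedge2 u v | u v. u \<in> P \<and> v \<in> P}"

definition PsiP :: "(real^7) set \<Rightarrow> (real^7^7) set" where
  "PsiP P = span {Psi2 u v | u v. u \<in> P \<and> v \<in> P}"

definition Theta :: "(real^7) set \<Rightarrow> (real^7^7) set" where
  "Theta P = {X + Y | X Y. X \<in> Lambda2 P \<and> Y \<in> PsiP P}"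

end

theory Submission
  imports Defs
begin

lemma sumperm:
  assumes "finite S" "a \<notin> S"
  shows "(\<Sum>p | p permutes insert a S. of_int (sign p) * g p :: real) =
    (\<Sum>b\<in>insert a S. \<Sum>q | q permutes S. (if a = b then 1 else -1) * (of_int (sign q) * g (Transposition.transpose a b \<circ> q)))"
proof -
  have "(\<Sum>p | p permutes insert a S. of_int (sign p) * g p :: real) =
    (\<Sum>b\<in>insert a S. \<Sum>q | q permutes S. of_int (sign (Transposition.transpose a b \<circ> q)) * g (Transposition.transpose a b \<circ> q))"
    using sum_over_permutations_insert[OF assms, of "\<lambda>p. of_int (sign p) * g p"] by simp
  also have "\<dots> = (\<Sum>b\<in>insert a S. \<Sum>q | q permutes S. (if a = b then 1 else -1) * (of_int (sign q) * g (Transposition.transpose a b \<circ> q)))"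
    apply (intro sum.cong refl)
    apply (subst sign_compose)
      apply (rule permutation_swap_id)
    using assms(1) permutes_imp_permutation apply blast
    apply (simp add: sign_swap_id)
    done
  finally show ?thesis .
qed

lemma lt3: "{..<3::nat} = insert 0 (insert 1 (insert 2 {}))" by auto
lemma lt4: "{..<4::nat} = insert 0 (insert 1 (insert 2 (insert 3 {})))" by auto

definition Fp :: "nat set \<Rightarrow> ((nat \<Rightarrow> nat) \<Rightarrow> real) \<Rightarrow> real" where
  "Fp S g = (\<Sum>p | p permutes S. of_int (sign p) * g p)"

lemma Fp_insert: "finite S \<Longrightarrow> a \<notin> S \<Longrightarrow> Fp (insert a S) g =
   (\<Sum>b\<in>insert a S. (if a = b then 1 else -1) * Fp S (\<lambda>q. g (Transposition.transpose a b \<circ> q)))"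
  unfolding Fp_def by (simp add: sumperm sum_distrib_left)

lemma Fp_empty: "Fp {} g = g id"
  unfolding Fp_def by simp

lemma ef_Fp: "elem_form idx vs = Fp {..<length idx} (\<lambda>p. \<Prod>l<length idx. (vs ! (p l)) $ (idx ! l))"
  unfolding elem_form_def Fp_def ..

lemma ef3: "elem_form [i,j,k] [a,b,c] = c $ k * (b $ j * a $ i) - c $ k * (a $ j * b $ i) + (b $ k * (a $ j * c $ i) - b $ k * (c $ j * a $ i) + (a $ k * (c $ j * b $ i) - a $ k * (b $ j * c $ i)))"
  unfolding ef_Fp
  apply (simp only: list.size numeral_3_eq_3 )
  apply (simp add: lessThan_Suc Fp_insert Fp_empty)
  done

lemma ef4: "elem_form [i,j,k,l] [a,b,c,d] = d $ l * (c $ k * (b $ j * a $ i)) - d $ l * (c $ k * (a $ j * b $ i)) + (d $ l * (b $ k * (a $ j * c $ i)) - d $ l * (b $ k * (c $ j * a $ i)) + (d $ l * (a $ k * (c $ j * b $ i)) - d $ l * (a $ k * (b $ j * c $ i)))) + (c $ l * (d $ k * (a $ j * b $ i)) - c $ l * (d $ k * (b $ j * a $ i)) + (c $ l * (b $ k * (d $ j * a $ i)) - c $ l * (b $ k * (a $ j * d $ i)) + (c $ l * (a $ k * (b $ j * d $ i)) - c $ l * (a $ k * (d $ j * b $ i)))) + (b $ l * (c $ k * (a $ j * d $ i)) - b $ l * (c $ k * (d $ j * a $ i)) + (b $ l * (d $ k * (c $ j * a $ i)) - b $ l * (d $ k * (a $ j * c $ i)) + (b $ l * (a $ k * (d $ j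 * c $ i)) - b $ l * (a $ k * (c $ j * d $ i)))) + (a $ l * (c $ k * (d $ j * b $ i)) - a $ l * (c $ k * (b $ j * d $ i)) + (a $ l * (b $ k * (c $ j * d $ i)) - a $ l * (b $ k * (d $ j * c $ i)) + (a $ l * (d $ k * (b $ j * c $ i)) - a $ l * (d $ k * (c $ j * b $ i)))))))"
  unfolding ef_Fp
  apply (simp only: list.size numeral_3_eq_3 )
  apply (simp add: lessThan_Suc Fp_insert Fp_empty)
  done

lemma seven_zero[simp]: "(7::7) = 0" by simp

lemma U7aux: "(0::int) \<le> z \<Longrightarrow> z < 7 \<Longrightarrow> (of_int z :: 7) \<in> {0,1,2,3,4,5,6}"
proof -
  assume "0 \<le> z" "z < 7"
  then have "z=0 \<or> z=1 \<or> z=2 \<or> z=3 \<or> z=4 \<or> z=5 \<or> z=6" by arith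
  then show ?thesis by (elim disjE) simp_all
qed
lemma U7: "(UNIV::7 set) = {0,1,2,3,4,5,6}"
  apply (rule UNIV_eq_I)
  subgoal for x apply (induct x) using U7aux by auto
  done

lemma sum7: "(\<Sum>i\<in>(UNIV::7 set). f i) = f 0 + f 1 + f 2 + f 3 + f 4 + f 5 + f 6"
  unfolding U7 by (simp add: add.assoc)

lemma all7: "(\<forall>i::7. P i) \<longleftrightarrow> P 0 \<and> P 1 \<and> P 2 \<and> P 3 \<and> P 4 \<and> P 5 \<and> P 6"
proof -
  have "(\<forall>i::7. P i) \<longleftrightarrow> (\<forall>i\<in>(UNIV::7 set). P i)" by simp
  also have "\<dots> \<longleftrightarrow> (\<forall>i\<in>{0,1,2,3,4,5,6}. P i)" by (simp only: U7)
  finally show ?thesis by simp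
qed

lemma ebasis_comp[simp]: "ebasis i $ j = (if j = i then 1 else 0)"
  by (simp add: ebasis_def axis_def)

lemma inner7: "inner (x::real^7) y = x$1*y$1 + x$2*y$2 + x$3*y$3 + x$4*y$4 + x$5*y$5 + x$6*y$6 + x$0*y$0"
  by (simp add: inner_vec_def sum7)

lemma crossc1: "cross7 a b $ 1 = a$2*b$3 - a$3*b$2 - a$6*b$0 + a$0*b$6 + a$4*b$5 - a$5*b$4"
  by (simp add: cross7_def phi_def ef3 algebra_simps)

lemma crossc2: "cross7 a b $ 2 = - a$1*b$3 + a$3*b$1 + a$5*b$0 - a$0*b$5 + a$4*b$6 - a$6*b$4"
  by (simp add: cross7_def phi_def ef3 algebra_simps)

lemma crossc3: "cross7 a b $ 3 = a$1*b$2 - a$2*b$1 - a$5*b$6 + a$6*b$5 + a$4*b$0 - a$0*b$4"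
  by (simp add: cross7_def phi_def ef3 algebra_simps)

lemma crossc4: "cross7 a b $ 4 = - a$1*b$5 + a$5*b$1 - a$2*b$6 + a$6*b$2 - a$3*b$0 + a$0*b$3"
  by (simp add: cross7_def phi_def ef3 algebra_simps)

lemma crossc5: "cross7 a b $ 5 = - a$2*b$0 + a$0*b$2 - a$6*b$3 + a$3*b$6 - a$4*b$1 + a$1*b$4"
  by (simp add: cross7_def phi_def ef3 algebra_simps)

lemma crossc6: "cross7 a b $ 6 = a$1*b$0 - a$0*b$1 + a$5*b$3 - a$3*b$5 - a$4*b$2 + a$2*b$4"
  by (simp add: cross7_def phi_def ef3 algebra_simps)

lemma crossc7: "cross7 a b $ 0 = - a$1*b$6 + a$6*b$1 - a$5*b$2 + a$2*b$5 - a$4*b$3 + a$3*b$4"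
  by (simp add: cross7_def phi_def ef3 algebra_simps)

lemmas crossc = crossc1 crossc2 crossc3 crossc4 crossc5 crossc6 crossc7

lemma inner_ebasis[simp]: "inner x (ebasis i) = x $ i"
  by (simp add: ebasis_def inner_axis)

lemma phi_inner: "phi u v w = inner (cross7 u v) w"
  unfolding phi_def ef3 inner7 crossc by (simp add: algebra_simps)

lemma phi_cyc: "phi a b c = phi b c a"
  unfolding phi_def ef3 by (simp add: algebra_simps)

lemma cross_anti: "cross7 v w = - cross7 w v"
  by (simp add: vec_eq_iff all7 crossc)

lemma cross_cross: "cross7 v (cross7 v w) = inner v w *\<^sub>R v - inner v v *\<^sub>R w"
  by (simp add: vec_eq_iff all7 crossc inner7 algebra_simps)

lemma cross_add: "cross7 (x + y) z = cross7 x z + cross7 y z"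
  by (simp add: vec_eq_iff all7 crossc algebra_simps)

lemma cross_scale: "cross7 (c *\<^sub>R x) z = c *\<^sub>R cross7 x z"
  by (simp add: vec_eq_iff all7 crossc algebra_simps)

lemma cross_zero: "cross7 v 0 = 0"
  by (simp add: vec_eq_iff all7 crossc)

lemma wedge_comp: "wedge2 u v $ i $ j = u $ i * v $ j - u $ j * v $ i"
  by (simp add: wedge2_def form2_def)

lemma contr_comp: "contr_phi w $ i $ j = cross7 w (ebasis i) $ j"
  by (simp add: contr_phi_def form2_def phi_inner)

lemma contr_linear: "linear contr_phi"
  apply (rule linearI)
   apply (simp add: vec_eq_iff contr_comp cross_add)
  apply (simp add: vec_eq_iff contr_comp cross_scale)
  done

lemma perp_cross_nonzero:
  assumes "inner u a = 0" "u \<noteq> 0" "a \<noteq> 0"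
  shows "cross7 u a \<noteq> 0"
proof
  assume h: "cross7 u a = 0"
  have "cross7 u (cross7 u a) = - (inner u u) *\<^sub>R a"
    using cross_cross[of u a] assms(1) by simp
  then have "(inner u u) *\<^sub>R a = 0" using h cross_zero by simp
  then show False using assms by simp
qed

definition evf :: "real^7 \<Rightarrow> real^7 \<Rightarrow> real^7^7 \<Rightarrow> real" where
  "evf a b X = (\<Sum>i\<in>UNIV. \<Sum>j\<in>UNIV. a $ i * b $ j * X $ i $ j)"

lemma evf_linear: "linear (evf a b)"
  apply (rule linearI)
   apply (simp add: evf_def algebra_simps sum.distrib)
  apply (simp add: evf_def algebra_simps sum_distrib_left)
  done

lemma evf_wedge: "evf a b (wedge2 x y) = inner x a * inner y b - inner x b * inner y a"
  unfolding evf_def wedge_comp sum7 inner7 by (simp add: algebra_simps)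

lemma evf_contr: "evf a b (contr_phi w) = phi w a b"
  unfolding evf_def contr_comp sum7 phi_inner inner7 crossc by (simp add: algebra_simps)

lemma inner_wedge_contr: "inner (wedge2 u v) (contr_phi w) = 2 * phi w u v"
  unfolding inner_vec_def sum7 wedge_comp contr_comp phi_inner inner7 crossc by (simp add: algebra_simps)

lemma psi_basis_all: "\<forall>i j. psi u v (ebasis i) (ebasis j) = ((u $ i) * (v $ j) - (u $ j) * (v $ i)) - cross7 (cross7 u v) (ebasis i) $ j"
  unfolding all7 psi_def ef4 crossc by (simp add: algebra_simps)



lemma Psi2_eq: "Psi2 u v = wedge2 u v - contr_phi (cross7 u v)"
  by (simp add: vec_eq_iff Psi2_def form2_def wedge_comp contr_comp psi_basis_all)

lemma orth_in_P:
  fixes P :: "(real^7) set"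
  assumes "subspace P" "dim P = 3" "w \<in> P"
  obtains v where "v \<in> P" "v \<noteq> 0" "inner v w = 0"
proof -
  have sub: "span {w} \<subseteq> P" using assms by (simp add: span_minimal)
  have "dim (span {w}) \<le> 1" using dim_le_card[of "{w}" "{w}"] by (simp add: span_superset)
  then have "span {w} \<noteq> P" using assms(2) by auto
  moreover have spP: "span P = P" using assms(1) by simp
  ultimately have ps: "span {w} \<subset> span P" using sub by (metis psubsetI)
  then obtain x where "x \<noteq> 0" "x \<in> span P" "\<And>y. y \<in> span {w} \<Longrightarrow> orthogonal x y"
    using orthogonal_to_subspace_exists_gen[OF ps] by blast
  moreover have "x \<bullet> w = 0" using calculation(3)[of w] by (simp add: orthogonal_def span_base)
  ultimately show ?thesis using that spP by auto
qed

theorem corollary4p11: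
  fixes P :: "(real^7) set"
  assumes "associative P"
  shows "Theta P = {X + Y | X Y. X \<in> Lambda2 P \<and> Y \<in> contr_phi_set P}
     \<and> Lambda2 P \<inter> contr_phi_set P = {0}
     \<and> \<not> (\<forall>X\<in>Lambda2 P. \<forall>Y\<in>contr_phi_set P. X \<bullet> Y = 0)"
proof -
  have subP: "subspace P" and dimP: "dim P = 3" and clos: "\<And>u v. u \<in> P \<Longrightarrow> v \<in> P \<Longrightarrow> cross7 u v \<in> P"
    using assms unfolding associative_def by auto
  let ?L = "Lambda2 P"
  let ?C = "contr_phi_set P"
  let ?S = "PsiP P"
  have subL: "subspace ?L" unfolding Lambda2_def by (rule subspace_span)
  have subC: "subspace ?C" unfolding contr_phi_set_def
    by (rule linear_subspace_image[OF contr_linear subP])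
  have subS: "subspace ?S" unfolding PsiP_def by (rule subspace_span)
  have wL: "wedge2 u v \<in> ?L" if "u \<in> P" "v \<in> P" for u v
    unfolding Lambda2_def using that by (intro span_base) blast
  have cC: "contr_phi w \<in> ?C" if "w \<in> P" for w
    unfolding contr_phi_set_def using that by blast
  have pS: "Psi2 u v \<in> ?S" if "u \<in> P" "v \<in> P" for u v
    unfolding PsiP_def using that by (intro span_base) blast
  let ?LC = "{X + Y | X Y. X \<in> ?L \<and> Y \<in> ?C}"
  have subLC: "subspace ?LC" by (rule subspace_sums[OF subL subC])
  have S_LC: "?S \<subseteq> ?LC"
    unfolding PsiP_def
  proof (rule span_minimal[OF _ subLC])
    show "{Psi2 u v |u v. u \<in> P \<and> v \<in> P} \<subseteq> ?LC"
    proof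
      fix Z assume "Z \<in> {Psi2 u v |u v. u \<in> P \<and> v \<in> P}"
      then obtain u v where uv: "u \<in> P" "v \<in> P" "Z = Psi2 u v" by blast
      have "Z = wedge2 u v + contr_phi (- cross7 u v)"
        using uv(3) Psi2_eq linear_neg[OF contr_linear] by simp
      moreover have "- cross7 u v \<in> P" using clos[OF uv(1,2)] subP
        by (simp add: subspace_neg)
      ultimately show "Z \<in> ?LC" using wL[OF uv(1,2)] cC by blast
    qed
  qed
  have T1: "Theta P \<subseteq> ?LC"
  proof
    fix Z assume "Z \<in> Theta P"
    then obtain X Y where XY: "X \<in> ?L" "Y \<in> ?S" "Z = X + Y" unfolding Theta_def by blast
    then have "Y \<in> ?LC" using S_LC by blast
    moreover have "X \<in> ?LC" using XY(1) subspace_0[OF subC] by force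
    ultimately show "Z \<in> ?LC" using XY(3) subspace_add[OF subLC] by blast
  qed
  have C_Th: "contr_phi w \<in> Theta P" if wP: "w \<in> P" for w
  proof (cases "w = 0")
    case True
    have "contr_phi w = 0 + 0" using True linear_0[OF contr_linear] by simp
    then show ?thesis unfolding Theta_def using subspace_0[OF subL] subspace_0[OF subS] by blast
  next
    case False
    obtain v where v: "v \<in> P" "v \<noteq> 0" "inner v w = 0"
      using orth_in_P[OF subP dimP wP] by blast
    define x where "x = cross7 w v"
    have xP: "x \<in> P" using clos[OF wP v(1)] x_def by simp
    have "cross7 v x = - cross7 v (cross7 v w)" unfolding x_def
      by (metis cross_anti linear_neg[OF contr_linear] add.inverse_inverse cross_add cross_scale
          scaleR_minus1_left)
    also have "\<dots> = inner v v *\<^sub>R w" using cross_cross[of v w] v(3) by simp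
    finally have cvx: "cross7 v x = inner v v *\<^sub>R w" .
    have vv: "inner v v \<noteq> 0" using v(2) by simp
    have "w = (1 / inner v v) *\<^sub>R cross7 v x" using cvx vv by simp
    then have "contr_phi w = (1 / inner v v) *\<^sub>R contr_phi (cross7 v x)"
      using linear_cmul[OF contr_linear] by metis
    also have "contr_phi (cross7 v x) = wedge2 v x - Psi2 v x" using Psi2_eq by simp
    finally have "contr_phi w = (1 / inner v v) *\<^sub>R wedge2 v x + (- (1 / inner v v)) *\<^sub>R Psi2 v x"
      by (simp add: algebra_simps)
    moreover have "(1 / inner v v) *\<^sub>R wedge2 v x \<in> ?L"
      using subspace_scale[OF subL wL[OF v(1) xP]] by blast
    moreover have "(- (1 / inner v v)) *\<^sub>R Psi2 v x \<in> ?S"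
      using subspace_scale[OF subS pS[OF v(1) xP]] by blast
    ultimately show ?thesis unfolding Theta_def by blast
  qed
  have T2: "?LC \<subseteq> Theta P"
  proof
    fix Z assume "Z \<in> ?LC"
    then obtain X w where Xw: "X \<in> ?L" "w \<in> P" "Z = X + contr_phi w"
      unfolding contr_phi_set_def by blast
    obtain X' Y' where XY': "X' \<in> ?L" "Y' \<in> ?S" "contr_phi w = X' + Y'"
      using C_Th[OF Xw(2)] unfolding Theta_def by blast
    have "Z = (X + X') + Y'" using Xw(3) XY'(3) by (simp add: algebra_simps)
    moreover have "X + X' \<in> ?L" using subspace_add[OF subL Xw(1) XY'(1)] .
    ultimately show "Z \<in> Theta P" unfolding Theta_def using XY'(2) by blast
  qed
  have part1: "Theta P = ?LC" using T1 T2 by blast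
  have part2: "?L \<inter> ?C = {0}"
  proof
    show "{0} \<subseteq> ?L \<inter> ?C" using subspace_0[OF subL] subspace_0[OF subC] by blast
  next
    show "?L \<inter> ?C \<subseteq> {0}"
    proof
      fix Z assume Z: "Z \<in> ?L \<inter> ?C"
      then obtain w where w: "w \<in> P" "Z = contr_phi w" unfolding contr_phi_set_def by blast
      have "w = 0"
      proof (rule ccontr)
        assume wne: "w \<noteq> 0"
        have dl: "dim P < DIM(real^7)" using dimP by simp
        obtain a where a: "a \<noteq> 0" "\<And>y. y \<in> span P \<Longrightarrow> orthogonal a y"
          using orthogonal_to_subspace_exists[OF dl] by blast
        have aP: "inner y a = 0" if "y \<in> P" for y
          using a(2)[of y] that span_base[of y P] by (simp add: orthogonal_def inner_commute)
        define b where "b = cross7 w a"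
        have "evf a b Z = 0"
        proof (rule linear_eq_0_on_span[OF evf_linear])
          show "\<And>x. x \<in> {wedge2 u v |u v. u \<in> P \<and> v \<in> P} \<Longrightarrow> evf a b x = 0"
            using aP by (auto simp: evf_wedge)
          show "Z \<in> span {wedge2 u v |u v. u \<in> P \<and> v \<in> P}" using Z unfolding Lambda2_def by blast
        qed
        moreover have "evf a b Z = inner b b"
          using w(2) by (simp add: evf_contr phi_inner b_def)
        ultimately have "b = 0" by simp
        moreover have "b \<noteq> 0" unfolding b_def
          using perp_cross_nonzero[OF _ wne a(1)] aP[OF w(1)] by (simp add: inner_commute)
        ultimately show False by simp
      qed
      then show "Z \<in> {0}" using w(2) linear_0[OF contr_linear] by simp
    qed
  qed
  have "\<not> P \<subseteq> {0}" using dimP dim_eq_0[of P] by auto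
  then obtain u where u: "u \<in> P" "u \<noteq> 0" by blast
  obtain v where v: "v \<in> P" "v \<noteq> 0" "inner v u = 0"
    using orth_in_P[OF subP dimP u(1)] by blast
  have cuv: "cross7 u v \<noteq> 0"
    using perp_cross_nonzero[OF _ u(2) v(2)] v(3) by (simp add: inner_commute)
  have "inner (wedge2 u v) (contr_phi (cross7 u v)) = 2 * inner (cross7 u v) (cross7 u v)"
    using phi_cyc[of "cross7 u v" u v] by (simp add: inner_wedge_contr phi_inner)
  then have "inner (wedge2 u v) (contr_phi (cross7 u v)) \<noteq> 0" using cuv by simp
  then have part3: "\<not> (\<forall>X\<in>?L. \<forall>Y\<in>?C. X \<bullet> Y = 0)"
    using wL[OF u(1) v(1)] cC[OF clos[OF u(1) v(1)]] by blast
  show ?thesis using part1 part2 part3 by blast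
qed

end
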